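(* Let $L\in\mathbb R^{N\times N}$ be symmetric positive semidefinite. For $\ell=1,\dots,c$ let $P_\ell\in\mathbb R^{N_\ell\times N_{\ell-1}}$ ($N_0=N$) have full row rank with Moore–Penrose pseudoinverse $P_\ell^+$, and define $L_0=L$, $L_\ell=(P_\ell^+)^\top L_{\ell-1}P_\ell^+$, $\Pi_\ell=P_\ell^+P_\ell$, $\Pi_\ell^\perp=I-\Pi_\ell$, $\Pi=P_1^+\cdots P_c^+P_c\cdots P_1$ and $\Pi^\perp=I-\Pi$. Fix $x\in\mathbb R^N$ and set $x_0=x$, $x_\ell=P_\ell x_{\ell-1}$. If there are $\sigma_1,\dots,\sigma_c\ge0$ with $$\|\Pi_\ell^\perp x_{\ell-1}\|_{L_{\ell-1}}\le\sigma_\ell\|x_{\ell-1}\|_{L_{\ell-1}}\quad\text{for each }\ell\le c,$$ then $$\|\Pi^\perp x\|_L\le\Big(\sum_{\ell=1}^c\sigma_\ell\prod_{q=1}^{\ell-1}(1+\sigma_q)\Big)\|x\|_L=\Big(\prod_{\ell=1}^c(1+\sigma_\ell)-1\Big)\|x\|_L.$$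
   Context: For PSD $M$, $\|y\|_M=\sqrt{y^\top My}$. *)

theory Defs
  imports "Jordan_Normal_Form.Matrix" "Jordan_Normal_Form.DL_Rank"
begin

definition mp_pinv :: "real mat \<Rightarrow> real mat" where
  "mp_pinv A = (THE B. B \<in> carrier_mat (dim_col A) (dim_row A) \<and>
       A * B * A = A \<and> B * A * B = B \<and>
       transpose_mat (A * B) = A * B \<and> transpose_mat (B * A) = B * A)"

definition sym_psd :: "nat \<Rightarrow> real mat \<Rightarrow> bool" where
  "sym_psd n M \<longleftrightarrow> M \<in> carrier_mat n n \<and> transpose_mat M = M \<and>
       (\<forall>y \<in> carrier_vec n. y \<bullet> (M *\<^sub>v y) \<ge> 0)"

definition full_row_rank :: "real mat \<Rightarrow> bool" where
  "full_row_rank A \<longleftrightarrow> vec_space.rank (dim_row A) A = dim_row A"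

definition mnorm :: "real mat \<Rightarrow> real vec \<Rightarrow> real" where
  "mnorm M y = sqrt (y \<bullet> (M *\<^sub>v y))"

fun Lseq :: "real mat \<Rightarrow> (nat \<Rightarrow> real mat) \<Rightarrow> nat \<Rightarrow> real mat" where
  "Lseq L P 0 = L"
| "Lseq L P (Suc l) = transpose_mat (mp_pinv (P (Suc l))) * Lseq L P l * mp_pinv (P (Suc l))"

fun xseq :: "real vec \<Rightarrow> (nat \<Rightarrow> real mat) \<Rightarrow> nat \<Rightarrow> real vec" where
  "xseq x P 0 = x"
| "xseq x P (Suc l) = P (Suc l) *\<^sub>v xseq x P l"

fun Pdown :: "nat \<Rightarrow> (nat \<Rightarrow> real mat) \<Rightarrow> nat \<Rightarrow> real mat" where
  "Pdown N P 0 = 1\<^sub>m N"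
| "Pdown N P (Suc l) = P (Suc l) * Pdown N P l"

fun Pup :: "nat \<Rightarrow> (nat \<Rightarrow> real mat) \<Rightarrow> nat \<Rightarrow> real mat" where
  "Pup N P 0 = 1\<^sub>m N"
| "Pup N P (Suc l) = Pup N P l * mp_pinv (P (Suc l))"

end

theory Submission
  imports Defs
begin


lemma (in vec_space) full_rank_surj:
  assumes A: "A \<in> carrier_mat n nc" and r: "rank A = n" and y: "y \<in> carrier_vec n"
  shows "\<exists>x \<in> carrier_vec nc. A *\<^sub>v x = y"
proof -
  obtain S where S: "maximal S (\<lambda>T. T \<subseteq> set (cols A) \<and> lin_indpt T)"
    using maximal_exists[of "(\<lambda>T. T \<subseteq> set (cols A) \<and> lin_indpt T)" "card (set (cols A))" "{}"]
    by (meson List.finite_set card_mono empty_iff empty_subsetI finite_lin_indpt2 rev_finite_subset)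
  have card: "card S = n" using rank_card_indpt[OF A S] r by simp
  have Ssub: "S \<subseteq> set (cols A)" and li: "lin_indpt S" using S unfolding maximal_def by auto
  have "set (cols A) \<subseteq> carrier_vec n" using cols_dim A carrier_matD(1) by blast
  hence Scar: "S \<subseteq> carrier_vec n" using Ssub by auto
  have fin: "finite S" using Ssub finite_subset by blast
  have "basis S" by (rule dim_li_is_basis[OF fin_dim fin Scar li], simp add: card dim_is_n)
  hence "span S = carrier_vec n" unfolding basis_def by auto
  moreover have "span S \<subseteq> span (set (cols A))" using Ssub by (rule span_is_monotone)
  ultimately have "y \<in> col_space A" unfolding col_space_def using y by auto
  thus ?thesis using col_space_eq[OF A] A by auto
qed

lemma full_row_rank_surj:
  assumes A: "A \<in> carrier_mat m n" and r: "full_row_rank A" and y: "y \<in> carrier_vec m"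
  shows "\<exists>x \<in> carrier_vec n. A *\<^sub>v x = y"
  using vec_space.full_rank_surj[OF A _ y] r A unfolding full_row_rank_def by auto



lemma pinv_unique:
  fixes A B C :: "real mat"
  assumes A: "A \<in> carrier_mat m n" and B: "B \<in> carrier_mat n m" and C: "C \<in> carrier_mat n m"
    and B1: "A*B*A = A" and B2: "B*A*B = B" and B3: "transpose_mat (A*B) = A*B"
    and B4: "transpose_mat (B*A) = B*A"
    and C1: "A*C*A = A" and C2: "C*A*C = C" and C3: "transpose_mat (A*C) = A*C"
    and C4: "transpose_mat (C*A) = C*A"
  shows "B = C"
proof -
  have tA: "transpose_mat A \<in> carrier_mat n m" using A by simp
  have tB: "transpose_mat B \<in> carrier_mat m n" using B by simp
  have tACA: "transpose_mat (A*C*A) = transpose_mat A * (A*C)"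
    using transpose_mult[of "A*C" m m A n] A C C3 by simp
  have tCAB: "transpose_mat (A*C*A) = (C*A) * transpose_mat A"
    using transpose_mult[of A m n "C*A" n] A C C4 by (simp add: assoc_mult_mat[OF A C A])
  have AB: "A*B = A*C"
  proof -
    have "A*B = transpose_mat B * transpose_mat A" using B3 transpose_mult[OF A B] by simp
    also have "\<dots> = transpose_mat B * (transpose_mat A * (A*C))" using tACA C1 by simp
    also have "\<dots> = (transpose_mat B * transpose_mat A) * (A*C)"
      using assoc_mult_mat[OF tB tA mult_carrier_mat[OF A C]] by simp
    also have "\<dots> = (A*B) * (A*C)" using B3 transpose_mult[OF A B] by simp
    also have "\<dots> = (A*B*A)*C" using assoc_mult_mat[OF mult_carrier_mat[OF A B] A C] by simp
    finally show ?thesis using B1 by simp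
  qed
  have BA: "B*A = C*A"
  proof -
    have "B*A = transpose_mat A * transpose_mat B" using B4 transpose_mult[OF B A] by simp
    also have "\<dots> = ((C*A) * transpose_mat A) * transpose_mat B" using tCAB C1 by simp
    also have "\<dots> = (C*A) * (transpose_mat A * transpose_mat B)"
      using assoc_mult_mat[OF mult_carrier_mat[OF C A] tA tB] by simp
    also have "\<dots> = (C*A) * (B*A)" using B4 transpose_mult[OF B A] by simp
    also have "\<dots> = C*(A*B*A)" using assoc_mult_mat[OF C A mult_carrier_mat[OF B A]]
        assoc_mult_mat[OF A B A] by simp
    finally show ?thesis using B1 by simp
  qed
  have "B = B*(A*B)" using B2 assoc_mult_mat[OF B A B] by simp
  also have "\<dots> = B*(A*C)" using AB by simp
  also have "\<dots> = (B*A)*C" using assoc_mult_mat[OF B A C] by simp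
  also have "\<dots> = (C*A)*C" using BA by simp
  finally show ?thesis using C2 by simp
qed

lemma self_sprod_zero:
  fixes w :: "real vec"
  assumes w: "w \<in> carrier_vec n" and z: "w \<bullet> w = 0"
  shows "w = 0\<^sub>v n"
proof -
  have "(\<Sum>i\<in>{0..<n}. w$i*w$i) = 0" using z w unfolding scalar_prod_def by simp
  hence "\<forall>i\<in>{0..<n}. w$i*w$i = 0" using sum_nonneg_eq_0_iff[of "{0..<n}" "\<lambda>i. w$i*w$i"] by simp
  thus ?thesis using w by (intro eq_vecI) auto
qed

lemma pinv_exists:
  fixes A :: "real mat"
  assumes A: "A \<in> carrier_mat m n" and r: "full_row_rank A"
  shows "\<exists>B. B \<in> carrier_mat n m \<and> A*B*A = A \<and> B*A*B = B \<and>
       transpose_mat (A*B) = A*B \<and> transpose_mat (B*A) = B*A"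
proof -
  define G where "G = A * transpose_mat A"
  have tA: "transpose_mat A \<in> carrier_mat n m" using A by simp
  have G: "G \<in> carrier_mat m m" unfolding G_def using A by simp
  have dG: "det G \<noteq> 0"
  proof
    assume "det G = 0"
    then obtain v where v: "v \<in> carrier_vec m" "v \<noteq> 0\<^sub>v m" "G *\<^sub>v v = 0\<^sub>v m"
      using det_0_iff_vec_prod_zero_field[OF G] by auto
    define w where "w = transpose_mat A *\<^sub>v v"
    have w: "w \<in> carrier_vec n" unfolding w_def using tA v by simp
    have "w \<bullet> w = v \<bullet> (A *\<^sub>v w)"
      unfolding w_def by (rule transpose_vec_mult_scalar[OF A _ v(1)], simp add: w[unfolded w_def])
    also have "A *\<^sub>v w = G *\<^sub>v v" unfolding w_def G_def using A tA v by simp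
    finally have "w \<bullet> w = 0" using v by simp
    hence w0: "w = 0\<^sub>v n" using self_sprod_zero w by blast
    obtain x where x: "x \<in> carrier_vec n" "A *\<^sub>v x = v" using full_row_rank_surj[OF A r v(1)] by auto
    have "v \<bullet> v = w \<bullet> x"
      unfolding w_def using transpose_vec_mult_scalar[OF A x(1) v(1)] x(2) by simp
    also have "\<dots> = 0" using w0 x by simp
    finally have "v = 0\<^sub>v m" using self_sprod_zero v(1) by blast
    with v(2) show False by simp
  qed
  from det_non_zero_imp_unit[OF G dG, of "()"]
  obtain Gi where Gi: "Gi \<in> carrier_mat m m" "Gi * G = 1\<^sub>m m" "G * Gi = 1\<^sub>m m"
    unfolding Units_def ring_mat_def by auto
  have tG: "transpose_mat G = G" unfolding G_def using transpose_mult[OF A tA] by simp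
  have tGi: "transpose_mat Gi = Gi"
  proof -
    have "transpose_mat Gi * G = 1\<^sub>m m"
      using arg_cong[OF Gi(3), of transpose_mat] transpose_mult[OF G Gi(1)] tG by simp
    have tGc: "transpose_mat Gi \<in> carrier_mat m m" using Gi(1) by simp
    have "(transpose_mat Gi * G) * Gi = transpose_mat Gi"
      using assoc_mult_mat[OF tGc G Gi(1)] Gi(3) tGc by simp
    thus ?thesis using \<open>transpose_mat Gi * G = 1\<^sub>m m\<close> Gi(1) by simp
  qed
  define B where "B = transpose_mat A * Gi"
  have B: "B \<in> carrier_mat n m" unfolding B_def using tA Gi by simp
  have AB: "A * B = 1\<^sub>m m" unfolding B_def
    using assoc_mult_mat[OF A tA Gi(1)] Gi(3) unfolding G_def by simp
  have BA: "transpose_mat (B*A) = B*A"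
  proof -
    have "transpose_mat (B*A) = transpose_mat A * transpose_mat B" using transpose_mult[OF B A] .
    also have "transpose_mat B = transpose_mat Gi * A" unfolding B_def
      using transpose_mult[OF tA Gi(1)] by simp
    also have "transpose_mat A * (transpose_mat Gi * A) = B * A" unfolding B_def tGi
      using assoc_mult_mat[OF tA Gi(1) A] by simp
    finally show ?thesis .
  qed
  show ?thesis
  proof (intro exI conjI)
    show "B \<in> carrier_mat n m" by fact
    show "A*B*A = A" using AB A by simp
    show "B*A*B = B" using assoc_mult_mat[OF B A B] AB B by simp
    show "transpose_mat (A*B) = A*B" using AB by simp
    show "transpose_mat (B*A) = B*A" by fact
  qed
qed


lemma mp_pinv_carrier:
  fixes A :: "real mat"
  assumes A: "A \<in> carrier_mat m n" and r: "full_row_rank A"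
  shows "mp_pinv A \<in> carrier_mat n m"
proof -
  let ?Q = "\<lambda>B. B \<in> carrier_mat (dim_col A) (dim_row A) \<and>
       A * B * A = A \<and> B * A * B = B \<and>
       transpose_mat (A * B) = A * B \<and> transpose_mat (B * A) = B * A"
  have dims: "dim_col A = n" "dim_row A = m" using A by auto
  have "\<exists>!B. ?Q B"
  proof -
    obtain B where "B \<in> carrier_mat n m \<and> A*B*A = A \<and> B*A*B = B \<and>
       transpose_mat (A*B) = A*B \<and> transpose_mat (B*A) = B*A" using pinv_exists[OF A r] by blast
    hence QB: "?Q B" using dims by simp
    show ?thesis
    proof (rule ex1I[of _ B])
      show "?Q B" by fact
      fix C assume "?Q C"
      thus "C = B" using pinv_unique[OF A, of C B] QB dims by auto
    qed
  qed
  from theI'[OF this] show ?thesis unfolding mp_pinv_def using dims by simp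
qed


lemma quad_disc:
  fixes A B C :: real
  assumes "\<And>t. A + 2*t*B + t*t*C \<ge> 0" and C: "C \<ge> 0"
  shows "B*B \<le> A*C"
proof (cases "C = 0")
  case True
  show ?thesis
  proof (cases "B = 0")
    case False
    have "A + 2*(-(A+1)/(2*B))*B + (-(A+1)/(2*B))*(-(A+1)/(2*B))*C \<ge> 0" by (rule assms)
    with True False show ?thesis by (simp add: field_simps)
  qed (use True in simp)
next
  case False
  with C have Cp: "C > 0" by simp
  have "A + 2*(-B/C)*B + (-B/C)*(-B/C)*C \<ge> 0" by (rule assms)
  hence "A - B*B/C \<ge> 0" using Cp by (simp add: field_simps)
  thus ?thesis using Cp by (simp add: field_simps)
qed



lemma psd_sym:
  assumes L: "sym_psd N L" and a: "a \<in> carrier_vec N" and b: "b \<in> carrier_vec N"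
  shows "a \<bullet> (L *\<^sub>v b) = b \<bullet> (L *\<^sub>v a)"
proof -
  have Lc: "L \<in> carrier_mat N N" and Lt: "transpose_mat L = L" using L unfolding sym_psd_def by auto
  have "(transpose_mat L *\<^sub>v b) \<bullet> a = b \<bullet> (L *\<^sub>v a)" by (rule transpose_vec_mult_scalar[OF Lc a b])
  moreover have "(L *\<^sub>v b) \<bullet> a = a \<bullet> (L *\<^sub>v b)" by (rule comm_scalar_prod[of _ N], insert Lc a b, auto)
  ultimately show ?thesis using Lt by simp
qed

lemma psd_expand:
  assumes L: "sym_psd N L" and a: "a \<in> carrier_vec N" and b: "b \<in> carrier_vec N"
  shows "(a + t \<cdot>\<^sub>v b) \<bullet> (L *\<^sub>v (a + t \<cdot>\<^sub>v b)) =
     a \<bullet> (L *\<^sub>v a) + 2*t*(a \<bullet> (L *\<^sub>v b)) + t*t*(b \<bullet> (L *\<^sub>v b))"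
proof -
  have Lc: "L \<in> carrier_mat N N" using L unfolding sym_psd_def by auto
  have tb: "t \<cdot>\<^sub>v b \<in> carrier_vec N" using b by simp
  have La: "L *\<^sub>v a \<in> carrier_vec N" and Lb: "L *\<^sub>v b \<in> carrier_vec N" using Lc a b by auto
  have "L *\<^sub>v (a + t \<cdot>\<^sub>v b) = L *\<^sub>v a + t \<cdot>\<^sub>v (L *\<^sub>v b)"
    using mult_add_distrib_mat_vec[OF Lc a tb] mult_mat_vec[OF Lc b] by simp
  hence "(a + t \<cdot>\<^sub>v b) \<bullet> (L *\<^sub>v (a + t \<cdot>\<^sub>v b)) =
     a \<bullet> (L *\<^sub>v a) + t*(a \<bullet> (L *\<^sub>v b)) + t*(b \<bullet> (L *\<^sub>v a)) + t*t*(b \<bullet> (L *\<^sub>v b))"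
    using a b La Lb tb
    by (simp add: add_scalar_prod_distrib[of _ N] scalar_prod_add_distrib[of _ N] algebra_simps)
  thus ?thesis using psd_sym[OF L b a] by simp
qed

lemma psd_nonneg:
  assumes L: "sym_psd N L" and a: "a \<in> carrier_vec N"
  shows "a \<bullet> (L *\<^sub>v a) \<ge> 0"
  using L a unfolding sym_psd_def by auto

lemma mnorm_triangle:
  assumes L: "sym_psd N L" and a: "a \<in> carrier_vec N" and b: "b \<in> carrier_vec N"
  shows "mnorm L (a + b) \<le> mnorm L a + mnorm L b"
proof -
  define A where "A = a \<bullet> (L *\<^sub>v a)"
  define B where "B = a \<bullet> (L *\<^sub>v b)"
  define C where "C = b \<bullet> (L *\<^sub>v b)"
  have A0: "A \<ge> 0" and C0: "C \<ge> 0" unfolding A_def C_def using psd_nonneg L a b by auto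
  have "\<And>t. A + 2*t*B + t*t*C \<ge> 0"
  proof -
    fix t
    have "(a + t \<cdot>\<^sub>v b) \<bullet> (L *\<^sub>v (a + t \<cdot>\<^sub>v b)) \<ge> 0" using psd_nonneg[OF L] a b by simp
    thus "A + 2*t*B + t*t*C \<ge> 0" using psd_expand[OF L a b, of t] unfolding A_def B_def C_def by simp
  qed
  hence BB: "B*B \<le> A*C" using quad_disc C0 by blast
  have "B \<le> sqrt A * sqrt C"
  proof -
    have "B \<le> \<bar>B\<bar>" by simp
    also have "\<bar>B\<bar> = sqrt (B*B)" by (simp add: real_sqrt_mult_self)
    also have "\<dots> \<le> sqrt (A*C)" using real_sqrt_le_mono[OF BB] .
    finally show ?thesis by (simp add: real_sqrt_mult)
  qed
  have "(a + b) \<bullet> (L *\<^sub>v (a + b)) = A + 2*B + C"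
    using psd_expand[OF L a b, of 1] a b unfolding A_def B_def C_def by simp
  also have "\<dots> \<le> (sqrt A + sqrt C)^2" using \<open>B \<le> sqrt A * sqrt C\<close> A0 C0
    by (simp add: power2_sum)
  finally have "sqrt ((a + b) \<bullet> (L *\<^sub>v (a + b))) \<le> sqrt ((sqrt A + sqrt C)^2)"
    by (rule real_sqrt_le_mono)
  also have "\<dots> = sqrt A + sqrt C" using A0 C0 by simp
  finally show ?thesis unfolding mnorm_def A_def C_def .
qed

lemma mnorm_uminus:
  assumes L: "sym_psd N L" and a: "a \<in> carrier_vec N"
  shows "mnorm L (- a) = mnorm L a"
proof -
  have Lc: "L \<in> carrier_mat N N" using L unfolding sym_psd_def by auto
  have "L *\<^sub>v (- a) = - (L *\<^sub>v a)" using Lc a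
    by (intro eq_vecI) auto
  thus ?thesis unfolding mnorm_def using Lc a by simp
qed




lemma sum_prod_identity:
  fixes \<sigma> :: "nat \<Rightarrow> real"
  shows "(\<Sum>l = 1..c. \<sigma> l * (\<Prod>q = 1..l - 1. 1 + \<sigma> q)) = (\<Prod>l = 1..c. 1 + \<sigma> l) - 1"
proof (induction c)
  case 0 then show ?case by simp
next
  case (Suc c)
  have "(\<Sum>l = 1..Suc c. \<sigma> l * (\<Prod>q = 1..l - 1. 1 + \<sigma> q))
      = (\<Sum>l = 1..c. \<sigma> l * (\<Prod>q = 1..l - 1. 1 + \<sigma> q)) + \<sigma> (Suc c) * (\<Prod>q = 1..c. 1 + \<sigma> q)"
    by (simp add: sum.cl_ivl_Suc)
  also have "\<dots> = (\<Prod>l = 1..Suc c. 1 + \<sigma> l) - 1" using Suc by (simp add: prod.cl_ivl_Suc algebra_simps)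
  finally show ?case .
qed

theorem lemma3:
  fixes N c :: nat and dims :: "nat \<Rightarrow> nat" and L :: "real mat"
    and P :: "nat \<Rightarrow> real mat" and x :: "real vec" and \<sigma> :: "nat \<Rightarrow> real"
  assumes L: "sym_psd N L"
    and d0: "dims 0 = N"
    and Pdim: "\<And>l. l \<in> {1..c} \<Longrightarrow> P l \<in> carrier_mat (dims l) (dims (l - 1))"
    and Prank: "\<And>l. l \<in> {1..c} \<Longrightarrow> full_row_rank (P l)"
    and x: "x \<in> carrier_vec N"
    and \<sigma>pos: "\<And>l. l \<in> {1..c} \<Longrightarrow> \<sigma> l \<ge> 0"
    and hyp: "\<And>l. l \<in> {1..c} \<Longrightarrow>
        mnorm (Lseq L P (l - 1))
          ((1\<^sub>m (dims (l - 1)) - mp_pinv (P l) * P l) *\<^sub>v xseq x P (l - 1))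
        \<le> \<sigma> l * mnorm (Lseq L P (l - 1)) (xseq x P (l - 1))"
  shows "mnorm L ((1\<^sub>m N - Pup N P c * Pdown N P c) *\<^sub>v x)
           \<le> (\<Sum>l = 1..c. \<sigma> l * (\<Prod>q = 1..l - 1. 1 + \<sigma> q)) * mnorm L x
       \<and> (\<Sum>l = 1..c. \<sigma> l * (\<Prod>q = 1..l - 1. 1 + \<sigma> q)) = (\<Prod>l = 1..c. 1 + \<sigma> l) - 1"
proof -
  have Lc: "L \<in> carrier_mat N N" using L unfolding sym_psd_def by auto
  have Bc: "\<And>l. l \<in> {1..c} \<Longrightarrow> mp_pinv (P l) \<in> carrier_mat (dims (l - 1)) (dims l)"
    using mp_pinv_carrier Pdim Prank by blast
  have I: "k \<le> c \<longrightarrow> Pdown N P k \<in> carrier_mat (dims k) N \<and> Pup N P k \<in> carrier_mat N (dims k)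
     \<and> xseq x P k = Pdown N P k *\<^sub>v x \<and> Lseq L P k \<in> carrier_mat (dims k) (dims k)
     \<and> (\<forall>y \<in> carrier_vec (dims k). y \<bullet> (Lseq L P k *\<^sub>v y) =
            (Pup N P k *\<^sub>v y) \<bullet> (L *\<^sub>v (Pup N P k *\<^sub>v y)))" for k
  proof (induction k)
    case 0 show ?case using d0 Lc x by simp
  next
    case (Suc k)
    show ?case
    proof
      assume kc: "Suc k \<le> c"
      hence l: "Suc k \<in> {1..c}" by simp
      from Suc kc have IH: "Pdown N P k \<in> carrier_mat (dims k) N" "Pup N P k \<in> carrier_mat N (dims k)"
        "xseq x P k = Pdown N P k *\<^sub>v x" "Lseq L P k \<in> carrier_mat (dims k) (dims k)"
        "\<And>y. y \<in> carrier_vec (dims k) \<Longrightarrow> y \<bullet> (Lseq L P k *\<^sub>v y) =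
            (Pup N P k *\<^sub>v y) \<bullet> (L *\<^sub>v (Pup N P k *\<^sub>v y))" by auto
      have Pl: "P (Suc k) \<in> carrier_mat (dims (Suc k)) (dims k)" using Pdim[OF l] by simp
      have Bl: "mp_pinv (P (Suc k)) \<in> carrier_mat (dims k) (dims (Suc k))" using Bc[OF l] by simp
      let ?B = "mp_pinv (P (Suc k))" let ?U = "Pup N P k"
      have c1: "Pdown N P (Suc k) \<in> carrier_mat (dims (Suc k)) N" using Pl IH(1) by simp
      have c2: "Pup N P (Suc k) \<in> carrier_mat N (dims (Suc k))" using Bl IH(2) by simp
      have c3: "xseq x P (Suc k) = Pdown N P (Suc k) *\<^sub>v x" using IH(3) Pl IH(1) x by simp
      have tB: "transpose_mat ?B \<in> carrier_mat (dims (Suc k)) (dims k)" using Bl by simp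
      have c4: "Lseq L P (Suc k) \<in> carrier_mat (dims (Suc k)) (dims (Suc k))" using tB IH(4) Bl by simp
      have c5: "y \<bullet> (Lseq L P (Suc k) *\<^sub>v y) =
            (Pup N P (Suc k) *\<^sub>v y) \<bullet> (L *\<^sub>v (Pup N P (Suc k) *\<^sub>v y))"
        if y: "y \<in> carrier_vec (dims (Suc k))" for y
      proof -
        have By: "?B *\<^sub>v y \<in> carrier_vec (dims k)" using Bl y by simp
        have z: "Lseq L P k *\<^sub>v (?B *\<^sub>v y) \<in> carrier_vec (dims k)" using IH(4) By by simp
        have "Lseq L P (Suc k) *\<^sub>v y = transpose_mat ?B *\<^sub>v (Lseq L P k *\<^sub>v (?B *\<^sub>v y))"
          using assoc_mult_mat_vec[OF mult_carrier_mat[OF tB IH(4)] Bl y]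
            assoc_mult_mat_vec[OF tB IH(4) By] by simp
        hence "y \<bullet> (Lseq L P (Suc k) *\<^sub>v y) = (transpose_mat ?B *\<^sub>v (Lseq L P k *\<^sub>v (?B *\<^sub>v y))) \<bullet> y"
          using comm_scalar_prod[OF y, of "transpose_mat ?B *\<^sub>v (Lseq L P k *\<^sub>v (?B *\<^sub>v y))"] tB z by simp
        also have "\<dots> = (Lseq L P k *\<^sub>v (?B *\<^sub>v y)) \<bullet> (?B *\<^sub>v y)"
          by (rule transpose_vec_mult_scalar[OF Bl y z])
        also have "\<dots> = (?B *\<^sub>v y) \<bullet> (Lseq L P k *\<^sub>v (?B *\<^sub>v y))"
          by (rule comm_scalar_prod[OF z By])
        also have "\<dots> = (?U *\<^sub>v (?B *\<^sub>v y)) \<bullet> (L *\<^sub>v (?U *\<^sub>v (?B *\<^sub>v y)))" by (rule IH(5)[OF By])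
        also have "?U *\<^sub>v (?B *\<^sub>v y) = Pup N P (Suc k) *\<^sub>v y" using IH(2) Bl y by simp
        finally show ?thesis .
      qed
      show "Pdown N P (Suc k) \<in> carrier_mat (dims (Suc k)) N \<and> Pup N P (Suc k) \<in> carrier_mat N (dims (Suc k))
     \<and> xseq x P (Suc k) = Pdown N P (Suc k) *\<^sub>v x \<and> Lseq L P (Suc k) \<in> carrier_mat (dims (Suc k)) (dims (Suc k))
     \<and> (\<forall>y \<in> carrier_vec (dims (Suc k)). y \<bullet> (Lseq L P (Suc k) *\<^sub>v y) =
            (Pup N P (Suc k) *\<^sub>v y) \<bullet> (L *\<^sub>v (Pup N P (Suc k) *\<^sub>v y)))"
        using c1 c2 c3 c4 c5 by blast
    qed
  qed
  define n where "n = mnorm L x"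
  define r where "r k = x - Pup N P k *\<^sub>v xseq x P k" for k
  have rc: "k \<le> c \<Longrightarrow> r k \<in> carrier_vec N" for k using I[of k] x unfolding r_def by auto
  have rform: "k \<le> c \<Longrightarrow> (1\<^sub>m N - Pup N P k * Pdown N P k) *\<^sub>v x = r k" for k
  proof -
    assume kc: "k \<le> c"
    have U: "Pup N P k \<in> carrier_mat N (dims k)" and D: "Pdown N P k \<in> carrier_mat (dims k) N"
      and X: "xseq x P k = Pdown N P k *\<^sub>v x" using I[of k] kc by auto
    have "(1\<^sub>m N - Pup N P k * Pdown N P k) *\<^sub>v x = 1\<^sub>m N *\<^sub>v x - (Pup N P k * Pdown N P k) *\<^sub>v x"
      by (rule minus_mult_distrib_mat_vec, insert U D x, auto)
    also have "\<dots> = r k" unfolding r_def X using U D x by simp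
    finally show ?thesis .
  qed
  have J: "k \<le> c \<longrightarrow> mnorm L (r k) + n \<le> (\<Prod>l = 1..k. 1 + \<sigma> l) * n" for k
  proof (induction k)
    case 0
    have "L *\<^sub>v 0\<^sub>v N \<in> carrier_vec N" using Lc by simp
    then show ?case unfolding r_def n_def using x by (simp add: mnorm_def)
  next
    case (Suc k)
    show ?case
    proof
      assume kc: "Suc k \<le> c"
      hence l: "Suc k \<in> {1..c}" and kc': "k \<le> c" by auto
      have IHe: "mnorm L (r k) + n \<le> (\<Prod>l = 1..k. 1 + \<sigma> l) * n" using Suc kc by simp
      have U: "Pup N P k \<in> carrier_mat N (dims k)" and X: "xseq x P k \<in> carrier_vec (dims k)"
        and Lk: "\<And>y. y \<in> carrier_vec (dims k) \<Longrightarrow> y \<bullet> (Lseq L P k *\<^sub>v y) =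
            (Pup N P k *\<^sub>v y) \<bullet> (L *\<^sub>v (Pup N P k *\<^sub>v y))"
        using I[of k] kc' x by auto
      let ?U = "Pup N P k" let ?X = "xseq x P k" let ?B = "mp_pinv (P (Suc k))" let ?P = "P (Suc k)"
      have Pl: "?P \<in> carrier_mat (dims (Suc k)) (dims k)" using Pdim[OF l] by simp
      have Bl: "?B \<in> carrier_mat (dims k) (dims (Suc k))" using Bc[OF l] by simp
      have mn: "y \<in> carrier_vec (dims k) \<Longrightarrow> mnorm (Lseq L P k) y = mnorm L (?U *\<^sub>v y)" for y
        unfolding mnorm_def using Lk by simp
      define w where "w = ?X - ?B *\<^sub>v (?P *\<^sub>v ?X)"
      have BPX: "?B *\<^sub>v (?P *\<^sub>v ?X) \<in> carrier_vec (dims k)" using Bl Pl X by simp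
      have wc: "w \<in> carrier_vec (dims k)" unfolding w_def using X BPX by simp
      have hw: "(1\<^sub>m (dims k) - ?B * ?P) *\<^sub>v ?X = w"
      proof -
        have "(1\<^sub>m (dims k) - ?B * ?P) *\<^sub>v ?X = 1\<^sub>m (dims k) *\<^sub>v ?X - (?B * ?P) *\<^sub>v ?X"
          by (rule minus_mult_distrib_mat_vec, insert Bl Pl X, auto)
        thus ?thesis unfolding w_def using Bl Pl X by simp
      qed
      have h: "mnorm (Lseq L P k) w \<le> \<sigma> (Suc k) * mnorm (Lseq L P k) ?X"
        using hyp[OF l] hw by simp
      have Uw: "?U *\<^sub>v w \<in> carrier_vec N" using U wc by simp
      have rS: "r (Suc k) = r k + ?U *\<^sub>v w"
      proof -
        have "?U *\<^sub>v w = ?U *\<^sub>v ?X - ?U *\<^sub>v (?B *\<^sub>v (?P *\<^sub>v ?X))"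
          unfolding w_def by (rule mult_minus_distrib_mat_vec[OF U X BPX])
        moreover have "Pup N P (Suc k) *\<^sub>v xseq x P (Suc k) = ?U *\<^sub>v (?B *\<^sub>v (?P *\<^sub>v ?X))"
          using U Bl Pl X by simp
        moreover have "?U *\<^sub>v ?X \<in> carrier_vec N" "?U *\<^sub>v (?B *\<^sub>v (?P *\<^sub>v ?X)) \<in> carrier_vec N"
          using U X BPX by auto
        ultimately show ?thesis unfolding r_def using x by (intro eq_vecI) auto
      qed
      have UX: "?U *\<^sub>v ?X = x + (- r k)"
        unfolding r_def using x U X by (intro eq_vecI) auto
      have nUX: "mnorm L (?U *\<^sub>v ?X) \<le> n + mnorm L (r k)"
        using mnorm_triangle[OF L x uminus_carrier_vec[THEN iffD2, OF rc[OF kc']]]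
          mnorm_uminus[OF L rc[OF kc']] UX unfolding n_def by simp
      have s0: "\<sigma> (Suc k) \<ge> 0" using \<sigma>pos[OF l] .
      have "mnorm L (r (Suc k)) \<le> mnorm L (r k) + mnorm L (?U *\<^sub>v w)"
        unfolding rS by (rule mnorm_triangle[OF L rc[OF kc'] Uw])
      also have "mnorm L (?U *\<^sub>v w) \<le> \<sigma> (Suc k) * mnorm L (?U *\<^sub>v ?X)"
        using h mn[OF wc] mn[OF X] by simp
      also have "\<dots> \<le> \<sigma> (Suc k) * (n + mnorm L (r k))" using nUX s0 by (rule mult_left_mono)
      finally have "mnorm L (r (Suc k)) + n \<le> (1 + \<sigma> (Suc k)) * (mnorm L (r k) + n)"
        by (simp add: algebra_simps)
      also have "\<dots> \<le> (1 + \<sigma> (Suc k)) * ((\<Prod>l = 1..k. 1 + \<sigma> l) * n)"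
        using IHe s0 by (intro mult_left_mono) auto
      also have "\<dots> = (\<Prod>l = 1..Suc k. 1 + \<sigma> l) * n" by (simp add: prod.cl_ivl_Suc)
      finally show "mnorm L (r (Suc k)) + n \<le> (\<Prod>l = 1..Suc k. 1 + \<sigma> l) * n" .
    qed
  qed
  have "mnorm L (r c) \<le> ((\<Prod>l = 1..c. 1 + \<sigma> l) - 1) * n" using J[of c] by (simp add: algebra_simps)
  thus ?thesis using rform[of c] sum_prod_identity[of \<sigma> c] unfolding n_def by simp
qed

end
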